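(* Let $f:\mathbb{R}^n\to\mathbb{R}$ satisfy: (A1) $f\in C^\infty(\mathbb{R}^n)$; (A2) there is $M>0$ with $f(x)>0$ for all $x\notin B(0,M)$; (A3) $\nabla f(p)\neq0$ for all $p\in\mathcal{B}:=\{p:f(p)=0\}$. For $p\in\mathcal{B}$, $r>0$ and $\beta\in(0,1)$ define the open slab \[\Gamma_r(p)=\{p+v:\ v\in\mathbb{R}^n,\ |v^T\nabla f(p)|<\beta r\|\nabla f(p)\|\}.\] Then for each thickness factor $\beta\in(0,1)$ there exists a distance $\sigma_2(\beta)>0$ such that for all $p\in\mathcal{B}$ and all $0<r<\sigma_2(\beta)$, \[\mathcal{B}\cap B(p,r)\subseteq\Gamma_r(p).\]
   Context: $\|\cdot\|$ is the Euclidean norm and $B(p,r)$ the open Euclidean ball of center $p$ and radius $r$. Under (A1)–(A3), $\mathcal{B}$ is a compact smooth hypersurface. *)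

theory Defs
  imports "HOL-Analysis.Analysis"
begin

fun C_k :: "nat \<Rightarrow> ('a::euclidean_space \<Rightarrow> real) \<Rightarrow> bool" where
  "C_k 0 f = continuous_on UNIV f"
| "C_k (Suc k) f = ((\<forall>x. f differentiable (at x)) \<and>
       (\<forall>v. C_k k (\<lambda>x. frechet_derivative f (at x) v)))"

definition C_infinity :: "('a::euclidean_space \<Rightarrow> real) \<Rightarrow> bool" where
  "C_infinity f = (\<forall>k. C_k k f)"

definition grad :: "('a::euclidean_space \<Rightarrow> real) \<Rightarrow> 'a \<Rightarrow> 'a" where
  "grad f p = (\<Sum>b\<in>Basis. frechet_derivative f (at p) b *\<^sub>R b)"

definition Gamma :: "('a::euclidean_space \<Rightarrow> real) \<Rightarrow> real \<Rightarrow> real \<Rightarrow> 'a \<Rightarrow> 'a set" where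
  "Gamma f \<beta> r p = {p + v | v. \<bar>v \<bullet> grad f p\<bar> < \<beta> * r * norm (grad f p)}"

end

theory Submission
  imports Defs
begin

lemma linear_inner_rep:
  fixes L :: "'a::euclidean_space \<Rightarrow> real"
  assumes "linear L"
  shows "L v = (\<Sum>b\<in>Basis. L b *\<^sub>R b) \<bullet> v"
proof -
  have "L v = L (\<Sum>b\<in>Basis. (v \<bullet> b) *\<^sub>R b)" by (simp add: euclidean_representation)
  also have "\<dots> = (\<Sum>b\<in>Basis. (v \<bullet> b) * L b)"
    using assms by (simp add: linear_sum linear_scale)
  also have "\<dots> = v \<bullet> (\<Sum>b\<in>Basis. L b *\<^sub>R b)"
    by (simp add: inner_sum_right mult.commute)
  also have "\<dots> = (\<Sum>b\<in>Basis. L b *\<^sub>R b) \<bullet> v"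
    by (rule inner_commute)
  finally show ?thesis .
qed

theorem lemma3:
  fixes f :: "'a::euclidean_space \<Rightarrow> real"
  assumes A1: "C_infinity f"
    and A2: "\<exists>M>0. \<forall>x. x \<notin> ball 0 M \<longrightarrow> f x > 0"
    and A3: "\<forall>p. f p = 0 \<longrightarrow> grad f p \<noteq> 0"
    and beta: "0 < \<beta>" "\<beta> < 1"
  shows "\<exists>\<sigma>>0. \<forall>p r. f p = 0 \<longrightarrow> 0 < r \<longrightarrow> r < \<sigma> \<longrightarrow>
           {x. f x = 0} \<inter> ball p r \<subseteq> Gamma f \<beta> r p"
proof -
  obtain M where M: "M > 0" "\<forall>x. x \<notin> ball 0 M \<longrightarrow> f x > 0" using A2 by blast
  have C1: "C_k (Suc 0) f" using A1 unfolding C_infinity_def by blast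
  hence dif: "\<And>x. f differentiable (at x)"
    and cont1: "\<And>v. continuous_on UNIV (\<lambda>x. frechet_derivative f (at x) v)" by auto
  have D: "\<And>x. (f has_derivative (\<lambda>v. grad f x \<bullet> v)) (at x)"
  proof -
    fix x
    have h: "(f has_derivative frechet_derivative f (at x)) (at x)"
      using dif frechet_derivative_works by blast
    have "frechet_derivative f (at x) = (\<lambda>v. grad f x \<bullet> v)"
    proof (rule ext)
      fix v
      show "frechet_derivative f (at x) v = grad f x \<bullet> v"
        unfolding grad_def by (rule linear_inner_rep[OF has_derivative_linear[OF h]])
    qed
    with h show "(f has_derivative (\<lambda>v. grad f x \<bullet> v)) (at x)" by simp
  qed
  have gc: "continuous_on UNIV (grad f)"
    unfolding grad_def
    by (intro continuous_intros cont1)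
  have fc: "continuous_on UNIV f"
    using dif by (simp add: continuous_at_imp_continuous_on differentiable_imp_continuous_within)
  define B where "B = {x. f x = 0}"
  have Bsub: "B \<subseteq> ball 0 M" using M unfolding B_def by force
  have "closed B" unfolding B_def using fc
    by (simp add: closed_Collect_eq continuous_on_const)
  hence Bc: "compact B" using Bsub bounded_ball bounded_subset compact_eq_bounded_closed by blast
  show ?thesis
  proof (cases "B = {}")
    case True
    then show ?thesis unfolding B_def by (intro exI[of _ 1]) auto
  next
    case False
    obtain q where q: "q \<in> B" "\<forall>y\<in>B. norm (grad f q) \<le> norm (grad f y)"
      using continuous_attains_inf[OF Bc False, of "\<lambda>x. norm (grad f x)"]
        continuous_on_norm[OF continuous_on_subset[OF gc]] by blast
    define c where "c = norm (grad f q)"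
    have c: "c > 0" using A3 q(1) unfolding c_def B_def by auto
    define e where "e = \<beta> * c / 2"
    have e: "e > 0" using c beta unfolding e_def by auto
    define K where "K = cball (0::'a) (M+1)"
    have "uniformly_continuous_on K (grad f)"
      using compact_uniformly_continuous[OF continuous_on_subset[OF gc] compact_cball] K_def by blast
    then obtain d where d: "d > 0" "\<forall>x\<in>K. \<forall>x'\<in>K. dist x' x < d \<longrightarrow> dist (grad f x') (grad f x) < e"
      unfolding uniformly_continuous_on_def using e by blast
    show ?thesis
    proof (intro exI[of _ "min d 1"] conjI allI impI subsetI)
      show "min d 1 > 0" using d by simp
      fix p r x
      assume p: "f p = 0" and r: "0 < r" "r < min d 1" and x: "x \<in> {x. f x = 0} \<inter> ball p r"
      have pB: "p \<in> B" using p B_def by simp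
      have pK: "norm p < M" using Bsub pB by auto
      have ybd: "\<And>y. y \<in> ball p r \<Longrightarrow> norm (grad f y - grad f p) \<le> e"
      proof -
        fix y assume y: "y \<in> ball p r"
        have "norm y \<le> norm p + dist p y" using norm_triangle_ineq[of p "y - p"] by (simp add: dist_norm norm_minus_commute)
        hence yK: "y \<in> K" using y r pK unfolding K_def by auto
        have pK': "p \<in> K" using pK K_def by auto
        have "dist y p < d" using y r by (simp add: dist_commute)
        hence "dist (grad f y) (grad f p) < e" using d(2) yK pK' by blast
        thus "norm (grad f y - grad f p) \<le> e" by (simp add: dist_norm)
      qed
      define \<phi> where "\<phi> y = f y - grad f p \<bullet> y" for y
      have bound: "norm (\<phi> x - \<phi> p) \<le> e * norm (x - p)"
      proof (rule differentiable_bound[where S="ball p r" and f'="\<lambda>y v. (grad f y - grad f p) \<bullet> v"])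
        show "convex (ball p r)" by simp
        show "x \<in> ball p r" using x by auto
        show "p \<in> ball p r" using r by auto
        fix y assume y: "y \<in> ball p r"
        have "(\<phi> has_derivative (\<lambda>v. grad f y \<bullet> v - grad f p \<bullet> v)) (at y)"
          using D[of y] unfolding \<phi>_def by (auto intro!: derivative_eq_intros)
        thus "(\<phi> has_derivative (\<lambda>v. (grad f y - grad f p) \<bullet> v)) (at y within ball p r)"
          by (simp add: has_derivative_at_withinI inner_diff_left)
        show "onorm (\<lambda>v. (grad f y - grad f p) \<bullet> v) \<le> e"
        proof (rule onorm_le)
          fix v
          have "norm ((grad f y - grad f p) \<bullet> v) \<le> norm (grad f y - grad f p) * norm v"
            using Cauchy_Schwarz_ineq2 by simp
          also have "\<dots> \<le> e * norm v" using ybd[OF y] by (simp add: mult_right_mono)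
          finally show "norm ((grad f y - grad f p) \<bullet> v) \<le> e * norm v" .
        qed
      qed
      have fx: "f x = 0" and xr: "norm (x - p) < r" using x by (auto simp: dist_norm norm_minus_commute)
      have "\<phi> x - \<phi> p = - (grad f p \<bullet> (x - p))" unfolding \<phi>_def using fx p by (simp add: inner_diff_right)
      hence "\<bar>(x - p) \<bullet> grad f p\<bar> \<le> e * norm (x - p)" using bound by (simp add: inner_commute)
      also have "\<dots> \<le> e * r" using xr e by simp
      also have "\<dots> < \<beta> * r * c" unfolding e_def using beta c r by simp
      also have "\<dots> \<le> \<beta> * r * norm (grad f p)"
        using q(2) pB beta r unfolding c_def by simp
      finally have "\<bar>(x - p) \<bullet> grad f p\<bar> < \<beta> * r * norm (grad f p)" .
      thus "x \<in> Gamma f \<beta> r p" unfolding Gamma_def by (intro CollectI exI[of _ "x - p"]) auto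
    qed
  qed
qed

end
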